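(* Let $n$ be a positive integer, $k$ an integer with $0\le k\le n$, and $0<\phi<\infty$. For $\ell = 0,\dots,n-k$ set $H_\ell = \phi^\ell\, S(n-\ell,k,\phi)/S(n,k,\phi)$. Then the moment generating function $m(t)=\mathbb{E}(e^{tR})$ of a random variable $R\sim\mathrm{Spillage}(n,k,\phi)$ satisfies, for all real $t$, $$m(t) = e^{t(n-k)}\sum_{\ell=0}^{n-k}\binom{n}{\ell}(e^{-t}-1)^\ell\, H_\ell.$$
   Context: $S(j,k)$ denotes the (central) Stirling numbers of the second kind. The noncentral Stirling numbers of the second kind are defined by $S(n,k,\phi) = \sum_{r=0}^{n-k}\binom{n}{k+r}\phi^{n-k-r}S(k+r,k)$ (zero if $n<k$). The spillage distribution $\mathrm{Spillage}(n,k,\phi)$ (for $0<\phi<\infty$) is the distribution on $\{0,\dots,n-k\}$ with mass function $\mathrm{Spillage}(r\mid n,k,\phi) = \binom{n}{k+r}\phi^{n-k-r}S(k+r,k)/S(n,k,\phi)$. *)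

theory Defs
  imports "HOL-Probability.Probability" "HOL-Combinatorics.Stirling"
begin

definition nc_stirling :: "nat \<Rightarrow> nat \<Rightarrow> real \<Rightarrow> real" where
  "nc_stirling n k \<phi> =
     (if n < k then 0
      else (\<Sum>r=0..n-k. real (n choose (k+r)) * \<phi> ^ (n-k-r) * real (Stirling (k+r) k)))"

definition spillage_mass :: "nat \<Rightarrow> nat \<Rightarrow> real \<Rightarrow> nat \<Rightarrow> real" where
  "spillage_mass n k \<phi> r =
     (if r \<le> n - k then real (n choose (k+r)) * \<phi> ^ (n-k-r) * real (Stirling (k+r) k)
                         / nc_stirling n k \<phi>
      else 0)"

text \<open>The spillage distribution as a pmf on nat (meaningful for 0 < phi, k <= n).\<close>
definition spillage_pmf :: "nat \<Rightarrow> nat \<Rightarrow> real \<Rightarrow> nat pmf" where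
  "spillage_pmf n k \<phi> = embed_pmf (spillage_mass n k \<phi>)"

end

theory Submission
  imports Defs
begin

lemma choose_swap: "(n choose l) * ((n - l) choose j) = (n choose j) * ((n - j) choose l)"
proof (cases "l + j \<le> n")
  case True
  have a: "(n choose (l+j)) * ((l+j) choose l) = (n choose l) * ((n - l) choose j)"
    using choose_mult[of l "l+j" n] True by simp
  have b: "(n choose (l+j)) * ((l+j) choose j) = (n choose j) * ((n - j) choose l)"
    using choose_mult[of j "l+j" n] True by simp
  have "((l+j) choose l) = ((l+j) choose j)"
    using binomial_symmetric[of l "l+j"] by simp
  then show ?thesis using a b by simp
next
  case False
  show ?thesis
  proof (cases "l \<le> n")
    case True
    then have "n - l < j" using False by auto
    then have z: "(n - l choose j) = 0" by (simp add: binomial_eq_0)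
    show ?thesis
    proof (cases "j \<le> n")
      case True
      then have "n - j < l" using False by auto
      then show ?thesis using z by (simp add: binomial_eq_0)
    next
      case False
      then show ?thesis using z by (simp add: binomial_eq_0)
    qed
  next
    case f2: False
    then have "n < l" "n - j < l" by auto
    then show ?thesis by (simp add: binomial_eq_0)
  qed
qed

lemma reindex:
  assumes "k \<le> n"
  shows "(\<Sum>j\<le>n. real (n choose j) * \<phi> ^ (n - j) * real (Stirling j k) * g j)
       = (\<Sum>r=0..n-k. real (n choose (k+r)) * \<phi> ^ (n-k-r) * real (Stirling (k+r) k) * g (k+r))"
proof -
  let ?f = "\<lambda>j. real (n choose j) * \<phi> ^ (n - j) * real (Stirling j k) * g j"
  have "{..n} = {..<k} \<union> {k..n}" using assms by auto
  then have "sum ?f {..n} = sum ?f {..<k} + sum ?f {k..n}"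
    by (simp add: sum.union_disjoint ivl_disj_int)
  also have "sum ?f {..<k} = 0" by (simp)
  also have "sum ?f {k..n} = sum ?f {0+k..(n-k)+k}" using assms by simp
  also have "\<dots> = (\<Sum>r=0..n-k. ?f (r+k))" by (rule sum.shift_bounds_cl_nat_ivl)
  also have "\<dots> = (\<Sum>r=0..n-k. real (n choose (k+r)) * \<phi> ^ (n-k-r) * real (Stirling (k+r) k) * g (k+r))"
    by (intro sum.cong) (auto simp: add.commute)
  finally show ?thesis by simp
qed

lemma ncA: "nc_stirling m k \<phi> = (\<Sum>j\<le>m. real (m choose j) * \<phi> ^ (m - j) * real (Stirling j k))"
proof (cases "m < k")
  case True
  then show ?thesis by (simp add: nc_stirling_def)
next
  case False
  then show ?thesis using reindex[of k m \<phi> "\<lambda>_. 1"] by (simp add: nc_stirling_def)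
qed

lemma main_id:
  fixes x \<phi> :: real
  assumes "k \<le> n"
  shows "(\<Sum>l=0..n-k. real (n choose l) * (x - 1) ^ l * (\<phi> ^ l * nc_stirling (n - l) k \<phi>))
       = (\<Sum>j\<le>n. real (n choose j) * \<phi> ^ (n - j) * real (Stirling j k) * x ^ (n - j))"
proof -
  let ?T = "\<lambda>l. real (n choose l) * (x - 1) ^ l * (\<phi> ^ l * nc_stirling (n - l) k \<phi>)"
  have "(\<Sum>l=0..n-k. ?T l) = (\<Sum>l\<le>n. ?T l)"
    by (rule sum.mono_neutral_left) (auto simp: nc_stirling_def)
  also have "\<dots> = (\<Sum>l\<le>n. \<Sum>j\<le>n. real ((n choose l) * ((n - l) choose j)) * (x - 1) ^ l
                      * \<phi> ^ (n - j) * real (Stirling j k))"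
  proof (intro sum.cong refl)
    fix l assume l: "l \<in> {..n}"
    have "?T l = (\<Sum>j\<le>n-l. real (n choose l) * (x - 1) ^ l * (\<phi> ^ l *
                 (real ((n - l) choose j) * \<phi> ^ (n - l - j) * real (Stirling j k))))"
      by (simp add: ncA sum_distrib_left)
    also have "\<dots> = (\<Sum>j\<le>n-l. real ((n choose l) * ((n - l) choose j)) * (x - 1) ^ l
                      * \<phi> ^ (n - j) * real (Stirling j k))"
    proof (intro sum.cong refl)
      fix j assume "j \<in> {..n-l}"
      then have "\<phi> ^ l * \<phi> ^ (n - l - j) = \<phi> ^ (n - j)" using l
        by (simp add: power_add[symmetric])
      then show "real (n choose l) * (x - 1) ^ l * (\<phi> ^ l *
                 (real ((n - l) choose j) * \<phi> ^ (n - l - j) * real (Stirling j k)))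
           = real ((n choose l) * ((n - l) choose j)) * (x - 1) ^ l
                      * \<phi> ^ (n - j) * real (Stirling j k)"
        by (simp add: algebra_simps)
    qed
    also have "\<dots> = (\<Sum>j\<le>n. real ((n choose l) * ((n - l) choose j)) * (x - 1) ^ l
                      * \<phi> ^ (n - j) * real (Stirling j k))"
      by (rule sum.mono_neutral_left) auto
    finally show "?T l = \<dots>" .
  qed
  also have "\<dots> = (\<Sum>j\<le>n. \<Sum>l\<le>n. real ((n choose j) * ((n - j) choose l)) * (x - 1) ^ l
                      * \<phi> ^ (n - j) * real (Stirling j k))"
    by (subst sum.swap) (simp add: choose_swap)
  also have "\<dots> = (\<Sum>j\<le>n. real (n choose j) * \<phi> ^ (n - j) * real (Stirling j k) * x ^ (n - j))"
  proof (intro sum.cong refl)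
    fix j assume j: "j \<in> {..n}"
    have "(\<Sum>l\<le>n. real ((n choose j) * ((n - j) choose l)) * (x - 1) ^ l
                      * \<phi> ^ (n - j) * real (Stirling j k))
        = (\<Sum>l\<le>n-j. real ((n choose j) * ((n - j) choose l)) * (x - 1) ^ l
                      * \<phi> ^ (n - j) * real (Stirling j k))"
      by (rule sum.mono_neutral_right) auto
    also have "\<dots> = real (n choose j) * \<phi> ^ (n - j) * real (Stirling j k) *
                   (\<Sum>l\<le>n-j. real ((n - j) choose l) * (x - 1) ^ l * 1 ^ (n - j - l))"
      by (simp add: sum_distrib_left algebra_simps)
    also have "(\<Sum>l\<le>n-j. real ((n - j) choose l) * (x - 1) ^ l * 1 ^ (n - j - l)) = x ^ (n - j)"
      using binomial_ring[of "x - 1" 1 "n - j"] by simp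
    finally show "(\<Sum>l\<le>n. real ((n choose j) * ((n - j) choose l)) * (x - 1) ^ l
                      * \<phi> ^ (n - j) * real (Stirling j k))
        = real (n choose j) * \<phi> ^ (n - j) * real (Stirling j k) * x ^ (n - j)" .
  qed
  finally show ?thesis .
qed

theorem lemma2:
  fixes n k :: nat and \<phi> t :: real
  assumes "n > 0" and "k \<le> n" and "\<phi> > 0"
  shows "measure_pmf.expectation (spillage_pmf n k \<phi>) (\<lambda>R. exp (t * real R))
       = exp (t * real (n - k)) *
         (\<Sum>l=0..n-k. real (n choose l) * (exp (-t) - 1) ^ l *
            (\<phi> ^ l * nc_stirling (n - l) k \<phi> / nc_stirling n k \<phi>))"
proof -
  define N where "N = nc_stirling n k \<phi>"
  let ?w = "\<lambda>r. real (n choose (k+r)) * \<phi> ^ (n-k-r) * real (Stirling (k+r) k)"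
  have N_sum: "N = (\<Sum>r=0..n-k. ?w r)" using assms by (simp add: N_def nc_stirling_def)
  have wnn: "\<And>r. ?w r \<ge> 0" using assms by simp
  have "?w 0 > 0" using assms by simp
  moreover have "?w 0 \<le> N" unfolding N_sum
    by (rule member_le_sum) (use wnn in auto)
  ultimately have Npos: "N > 0" by linarith
  have mass: "spillage_mass n k \<phi> r = (if r \<le> n - k then ?w r / N else 0)" for r
    by (simp add: spillage_mass_def N_def)
  have mnn: "\<And>r. spillage_mass n k \<phi> r \<ge> 0" using Npos wnn by (simp add: mass)
  have "(\<integral>\<^sup>+r. ennreal (spillage_mass n k \<phi> r) \<partial>count_space UNIV)
        = (\<Sum>r\<in>{0..n-k}. ennreal (spillage_mass n k \<phi> r))"
    by (rule nn_integral_count_space') (auto simp: mass)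
  also have "\<dots> = ennreal (\<Sum>r\<in>{0..n-k}. spillage_mass n k \<phi> r)"
    using mnn by (simp add: sum_ennreal)
  also have "(\<Sum>r\<in>{0..n-k}. spillage_mass n k \<phi> r) = (\<Sum>r\<in>{0..n-k}. ?w r / N)"
    by (intro sum.cong) (auto simp: mass)
  also have "\<dots> = (\<Sum>r\<in>{0..n-k}. ?w r) / N" by (rule sum_divide_distrib[symmetric])
  also have "\<dots> = 1" using Npos N_sum by simp
  finally have tot: "(\<integral>\<^sup>+r. ennreal (spillage_mass n k \<phi> r) \<partial>count_space UNIV) = 1" by simp
  have pmfeq: "pmf (spillage_pmf n k \<phi>) r = spillage_mass n k \<phi> r" for r
    unfolding spillage_pmf_def using pmf_embed_pmf[OF mnn tot] by simp
  have "measure_pmf.expectation (spillage_pmf n k \<phi>) (\<lambda>R. exp (t * real R))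
      = (\<Sum>r\<in>{0..n-k}. pmf (spillage_pmf n k \<phi>) r *\<^sub>R exp (t * real r))"
    by (rule integral_measure_pmf) (auto simp: set_pmf_eq pmfeq mass split: if_splits)
  also have "\<dots> = (\<Sum>r=0..n-k. ?w r * exp (t * real r)) / N"
    by (simp add: pmfeq mass sum_divide_distrib)
  also have "(\<Sum>r=0..n-k. ?w r * exp (t * real r))
      = (\<Sum>j\<le>n. real (n choose j) * \<phi> ^ (n - j) * real (Stirling j k) *
            (exp (t * real (n - k)) * exp (-t) ^ (n - j)))"
  proof -
    have "(\<Sum>j\<le>n. real (n choose j) * \<phi> ^ (n - j) * real (Stirling j k) *
            (exp (t * real (n - k)) * exp (-t) ^ (n - j)))
        = (\<Sum>r=0..n-k. ?w r * (exp (t * real (n - k)) * exp (-t) ^ (n - (k + r))))"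
      by (rule reindex[OF assms(2)])
    also have "\<dots> = (\<Sum>r=0..n-k. ?w r * exp (t * real r))"
    proof (intro sum.cong refl)
      fix r assume r: "r \<in> {0..n-k}"
      then have rr: "real (n - (k + r)) = real (n - k) - real r" using assms(2) by (simp add: of_nat_diff)
      from r have "exp (t * real (n - k)) * exp (-t) ^ (n - (k + r)) = exp (t * real r)"
        by (simp add: exp_of_nat_mult[symmetric] exp_add[symmetric] rr algebra_simps)
      then show "?w r * (exp (t * real (n - k)) * exp (-t) ^ (n - (k + r))) = ?w r * exp (t * real r)"
        by simp
    qed
    finally show ?thesis by simp
  qed
  also have "\<dots> = exp (t * real (n - k)) *
      (\<Sum>j\<le>n. real (n choose j) * \<phi> ^ (n - j) * real (Stirling j k) * exp (-t) ^ (n - j))"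
    by (simp add: sum_distrib_left algebra_simps)
  also have "\<dots> = exp (t * real (n - k)) *
      (\<Sum>l=0..n-k. real (n choose l) * (exp (-t) - 1) ^ l * (\<phi> ^ l * nc_stirling (n - l) k \<phi>))"
    using main_id[OF assms(2), of "exp (-t)" \<phi>] by simp
  finally show ?thesis
    by (simp add: N_def sum_divide_distrib[symmetric])
qed

end
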